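(* Let $F$ and the basis $\eta_1,\dots,\eta_n$ of $\mathrm{Lift}(F)$ be as described below. If $\eta=\sum_{j=1}^n b_j(X)\eta_j(X)\in\mathrm{Lift}(F)$ with $b_j\in\mathcal O_n$, then there exists $\xi\in\theta_n$ with $\eta\circ F=dF(\xi)$ whose linear part at $0$ has eigenvalues $b_1(0)\cdot 1,\ b_1(0)n,\ b_1(0)(n-1),\ \dots,\ b_1(0)\cdot 2$.
   Context: $F:(\mathbb C^n,0)\to(\mathbb C^n,0)$, $F(x_1,\dots,x_n)=(x_1^{n+1}+x_2x_1+x_3x_1^2+\cdots+x_nx_1^{n-1},x_2,\dots,x_n)$ is the stable unfolding of the $A_n$ singularity. $\mathcal O_n$ is the ring of germs of holomorphic functions on $(\mathbb C^n,0)$, $\theta_n$ the module of germs of vector fields. $\eta\in\theta_n$ is liftable for $F$ if $\eta\circ F=dF(\xi)$ for some $\xi\in\theta_n$; $\mathrm{Lift}(F)$ is the set of liftable vector fields. It is known that $\mathrm{Lift}(F)$ is a free $\mathcal O_n$-module with a basis $\eta_1,\dots,\eta_n$, $\eta_j=\eta_j^L+\eta_j^{\ge2}$ with $\eta_j^{\ge2}$ of order $\ge2$, and linear parts $\eta_1^L=(n+1)X_1\partial_{X_1}+nX_2\partial_{X_2}+\cdots+2X_n\partial_{X_n}$ and, for $2\le i\le n$, $\eta_i^L=(n+1)X_1\partial_{X_i}+nX_2\partial_{X_{i+1}}+\cdots+(i+1)X_{n+1-i}\partial_{X_n}$. Eigenvalues of a vector field vanishing at $0$ mean those of the matrix of its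 linear part. *)

theory Defs
  imports "HOL-Analysis.Analysis"
begin

text \<open>Points of C^n are vectors complex^'n with n = CARD('n); the coordinates
  x_1,...,x_n are x $ idx 1, ..., x $ idx n for a fixed bijection idx from {1..n}
  onto the index type.  Germs at 0 are represented by total functions, holomorphic
  on some open neighbourhood of 0; equalities of germs are equalities holding
  eventually in nhds 0.\<close>

definition holo_map :: "(complex^'n \<Rightarrow> complex^'m) \<Rightarrow> bool" where
  "holo_map f \<longleftrightarrow> (\<exists>U. open U \<and> 0 \<in> U \<and>
     (\<forall>x\<in>U. \<exists>D. (f has_derivative D) (at x) \<and> (\<forall>c v. D (c *s v) = c *s D v)))"

definition holo_fun :: "(complex^'n \<Rightarrow> complex) \<Rightarrow> bool" where
  "holo_fun f \<longleftrightarrow> (\<exists>U. open U \<and> 0 \<in> U \<and>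
     (\<forall>x\<in>U. \<exists>D. (f has_derivative D) (at x) \<and> (\<forall>c v. D (c *s v) = c * D v)))"

text \<open>The stable unfolding of A_n:
  F(x) = (x_1^(n+1) + x_2 x_1 + ... + x_n x_1^(n-1), x_2, ..., x_n).\<close>
definition FA :: "(nat \<Rightarrow> 'n::finite) \<Rightarrow> complex^'n \<Rightarrow> complex^'n" where
  "FA idx x = (\<chi> i. if i = idx 1
       then (x $ idx 1) ^ (CARD('n) + 1) + (\<Sum>k\<in>{2..CARD('n)}. x $ idx k * (x $ idx 1) ^ (k - 1))
       else x $ i)"

definition liftable :: "(complex^'n \<Rightarrow> complex^'n) \<Rightarrow> (complex^'n \<Rightarrow> complex^'n) \<Rightarrow> bool" where
  "liftable F eta \<longleftrightarrow> holo_map eta \<and>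
     (\<exists>xi. holo_map xi \<and>
        eventually (\<lambda>x. eta (F x) = frechet_derivative F (at x) (xi x)) (nhds 0))"

text \<open>Linear parts: eta_j^L = sum_{k=1}^{n+1-j} (n+2-k) X_k d/dX_{k+j-1};
  i.e. the coordinate m (j <= m <= n) equals (n+1+j-m) X_{m+1-j}.\<close>
definition etaL :: "(nat \<Rightarrow> 'n::finite) \<Rightarrow> nat \<Rightarrow> complex^'n \<Rightarrow> complex^'n" where
  "etaL idx j X = (\<Sum>m\<in>{j..CARD('n)}.
       axis (idx m) (of_nat (CARD('n) + 1 + j - m) * X $ idx (m + 1 - j)))"

end

theory Submission imports Defs begin


definition DP :: "(nat \<Rightarrow> 'n::finite) \<Rightarrow> complex^'n \<Rightarrow> complex^'n \<Rightarrow> complex" where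
  "DP idx x h = of_nat (CARD('n) + 1) * h $ idx 1 * (x $ idx 1) ^ (CARD('n) + 1 - 1)
     + (\<Sum>k\<in>{2..CARD('n)}. x $ idx k * (of_nat (k - 1) * h $ idx 1 * (x $ idx 1) ^ (k - 1 - 1))
        + h $ idx k * (x $ idx 1) ^ (k - 1))"

lemma vec_nth_deriv: "((\<lambda>x. x $ i) has_derivative (\<lambda>h. h $ i)) F"
  by (rule bounded_linear.has_derivative[OF bounded_linear_vec_nth has_derivative_ident])

lemma FA_comp_deriv:
  fixes idx :: "nat \<Rightarrow> 'n::finite" and x :: "complex^'n"
  shows "((\<lambda>x. FA idx x $ i) has_derivative (\<lambda>h. if i = idx 1 then DP idx x h else h $ i)) (at x)"
proof (cases "i = idx 1")
  case True
  have "((\<lambda>x. (x $ idx 1) ^ (CARD('n) + 1) + (\<Sum>k\<in>{2..CARD('n)}. x $ idx k * (x $ idx 1) ^ (k - 1)))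
     has_derivative DP idx x) (at x)"
    unfolding DP_def
    by (intro derivative_eq_intros; (rule vec_nth_deriv)?) auto
  thus ?thesis using True by (simp add: FA_def)
next
  case False
  thus ?thesis by (simp add: FA_def vec_nth_deriv)
qed

lemma norm_smult_cvec: "norm (c *s (x::complex^'n)) = norm c * norm x"
  unfolding norm_vec_def
  by (simp add: norm_mult L2_set_right_distrib)

lemma dir_lim:
  fixes f :: "complex^'n \<Rightarrow> complex^'m"
  assumes der: "(f has_derivative L) (at 0)" and f0: "f 0 = 0"
    and lin: "\<And>c v. L (c *s v) = c *s L v"
  shows "((\<lambda>u::complex. (1/u) *s f (u *s v)) \<longlongrightarrow> L v) (at 0)"
proof (cases "v = 0")
  case True
  have "L 0 = 0" using lin[of 0 0] by simp
  thus ?thesis using True f0 by simp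
next
  case False
  have "((\<lambda>h. norm (f (0 + h) - f 0 - L h) / norm h) \<longlongrightarrow> 0) (at 0)"
    using der unfolding has_derivative_at by blast
  hence t: "((\<lambda>h. norm (f h - L h) / norm h) \<longlongrightarrow> 0) (at 0)" using f0 by simp
  have fl: "filterlim (\<lambda>u::complex. u *s v) (at 0) (at 0)"
  proof (rule filterlim_atI)
    have "((\<lambda>u::complex. \<chi> i. u * v $ i) \<longlongrightarrow> (\<chi> i. 0 * v $ i)) (at 0)"
      by (intro tendsto_intros)
    thus "((\<lambda>u::complex. u *s v) \<longlongrightarrow> 0) (at 0)" by (simp add: vector_scalar_mult_def zero_vec_def)
    show "\<forall>\<^sub>F u in at (0::complex). u *s v \<noteq> 0"
      using False by (auto simp: eventually_at_filter vec_eq_iff)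
  qed
  have t2: "((\<lambda>u. norm (f (u *s v) - L (u *s v)) / norm (u *s v) * norm v) \<longlongrightarrow> 0 * norm v) (at 0)"
    by (intro tendsto_intros filterlim_compose[OF t fl])
  have eq: "norm (f (u *s v) - L (u *s v)) / norm (u *s v) * norm v = norm ((1/u) *s f (u *s v) - L v)"
    if "u \<noteq> 0" for u :: complex
  proof -
    have e1: "(1/u) *s f (u *s v) - L v = (1/u) *s (f (u *s v) - L (u *s v))"
      using that by (simp add: lin vector_ssub_ldistrib)
    have "norm ((1/u) *s f (u *s v) - L v) = norm (f (u *s v) - L (u *s v)) / cmod u"
      unfolding e1 norm_smult_cvec by (simp add: norm_divide)
    moreover have "norm (u *s v) = cmod u * norm v" by (rule norm_smult_cvec)
    ultimately show ?thesis using that False by simp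
  qed
  have "((\<lambda>u. norm ((1/u) *s f (u *s v) - L v)) \<longlongrightarrow> 0) (at 0)"
  proof (rule Lim_transform_eventually)
    show "((\<lambda>u. norm (f (u *s v) - L (u *s v)) / norm (u *s v) * norm v) \<longlongrightarrow> 0) (at 0)"
      using t2 by simp
    show "\<forall>\<^sub>F u in at 0. norm (f (u *s v) - L (u *s v)) / norm (u *s v) * norm v = norm ((1/u) *s f (u *s v) - L v)"
      unfolding eventually_at_filter by (intro always_eventually allI impI eq)
  qed
  thus ?thesis by (simp add: tendsto_norm_zero_iff LIM_zero_iff)
qed


lemma etaL_smult: "etaL idx j (c *s X) = c *s etaL idx j X"
  unfolding etaL_def by (auto simp add: vec_eq_iff sum_component sum_distrib_left axis_def mult.left_commute intro!: sum.cong)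

lemma etaL_entry:
  fixes idx :: "nat \<Rightarrow> 'n::finite"
  assumes inj: "inj_on idx {1..CARD('n)}" and j: "j \<in> {1..CARD('n)}" and k: "k \<in> {1..CARD('n)}"
    and m: "m \<in> {1..CARD('n)}"
  shows "etaL idx j (axis (idx m) 1) $ idx k = (if j \<le> k \<and> m = k + 1 - j then of_nat (CARD('n)+1+j-k) else 0)"
proof -
  have "etaL idx j (axis (idx m) 1) $ idx k = (\<Sum>m'\<in>{j..CARD('n)}. if m' = k then
      of_nat (CARD('n) + 1 + j - k) * axis (idx m) 1 $ idx (k + 1 - j) else 0)"
    unfolding etaL_def sum_component
  proof (rule sum.cong[OF refl])
    fix m' assume m': "m' \<in> {j..CARD('n)}"
    hence m1: "m' \<in> {1..CARD('n)}" using j by auto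
    have iff: "idx k = idx m' \<longleftrightarrow> m' = k" using inj_onD[OF inj _ m1 k] by auto
    show "axis (idx m') (of_nat (CARD('n) + 1 + j - m') * axis (idx m) 1 $ idx (m' + 1 - j)) $ idx k =
         (if m' = k then of_nat (CARD('n) + 1 + j - k) * axis (idx m) 1 $ idx (k + 1 - j) else 0)"
      unfolding axis_def vec_lambda_beta iff by simp
  qed
  also have "\<dots> = (if j \<le> k then of_nat (CARD('n) + 1 + j - k) * axis (idx m) 1 $ idx (k + 1 - j) else 0)"
    using k by (simp add: sum.delta')
  also have "\<dots> = (if j \<le> k \<and> m = k + 1 - j then of_nat (CARD('n)+1+j-k) else 0)"
  proof (cases "j \<le> k")
    case True
    have kj: "k + 1 - j \<in> {1..CARD('n)}" using True k j by auto
    have iff: "idx (k + 1 - j) = idx m \<longleftrightarrow> m = k + 1 - j" using inj_onD[OF inj _ kj m] by auto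
    show ?thesis using True unfolding axis_def vec_lambda_beta iff by simp
  qed simp
  finally show ?thesis .
qed

lemma vec_has_derivative:
  fixes f :: "complex^'n \<Rightarrow> complex^'m"
  assumes "\<And>i. ((\<lambda>x. f x $ i) has_derivative f' i) (at x)"
  shows "(f has_derivative (\<lambda>h. \<chi> i. f' i h)) (at x)"
proof -
  have bl: "\<And>i. bounded_linear (f' i)" using assms has_derivative_bounded_linear by blast
  have "linear (\<lambda>h. \<chi> i. f' i h)"
    by (rule linearI) (auto simp: vec_eq_iff bl bounded_linear.linear linear_add linear_scale)
  hence "bounded_linear (\<lambda>h. \<chi> i. f' i h)" by (simp add: linear_conv_bounded_linear)
  moreover have "((\<lambda>y. (f y - f x - (\<chi> i. f' i (y - x))) /\<^sub>R norm (y - x)) \<longlongrightarrow> 0) (at x)"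
  proof (rule vec_tendstoI)
    fix i
    have "((\<lambda>y. (f y $ i - f x $ i - f' i (y - x)) /\<^sub>R norm (y - x)) \<longlongrightarrow> 0) (at x)"
      using assms[of i] unfolding has_derivative_at_within by simp
    thus "((\<lambda>y. ((f y - f x - (\<chi> i. f' i (y - x))) /\<^sub>R norm (y - x)) $ i) \<longlongrightarrow> 0 $ i) (at x)"
      by simp
  qed
  ultimately show ?thesis unfolding has_derivative_at_within by simp
qed

lemma perm_rank_id:
  fixes r :: "'n::finite \<Rightarrow> nat"
  assumes p: "p permutes (UNIV::'n set)" and r: "inj r" and le: "\<And>i. r (p i) \<le> r i"
  shows "p = id"
proof -
  have "(\<Sum>i\<in>UNIV. r i) = (\<Sum>i\<in>UNIV. r (p i))"
    using sum.permute[OF p, of r] by (simp add: o_def)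
  hence eq: "\<And>i. r (p i) = r i"
    using le sum_strict_mono_ex1[of "UNIV::'n set" "\<lambda>i. r (p i)" r]
    by (metis finite le_less order.irrefl UNIV_I)
  show ?thesis using r eq by (auto simp: inj_def fun_eq_iff)
qed

lemma det_rank_tri:
  fixes A :: "'a::comm_ring_1^'n::finite^'n" and r :: "'n \<Rightarrow> nat"
  assumes r: "inj r" and z: "\<And>i j. r i < r j \<Longrightarrow> A$i$j = 0"
  shows "det A = prod (\<lambda>i. A$i$i) (UNIV:: 'n set)"
proof -
  let ?U = "UNIV:: 'n set"
  let ?PU = "{p. p permutes ?U}"
  let ?pp = "\<lambda>p. of_int (sign p) * prod (\<lambda>i. A$i$p i) (UNIV :: 'n set)"
  have id0: "{id} \<subseteq> ?PU"
    by (auto simp: permutes_id)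
  have p0: "\<forall>p \<in> ?PU - {id}. ?pp p = 0"
  proof
    fix p
    assume "p \<in> ?PU - {id}"
    then obtain i where i: "r i < r (p i)"
      using perm_rank_id[OF _ r, of p] by (metis DiffE insertCI leI mem_Collect_eq)
    from z[OF i] have "prod (\<lambda>i. A$i$p i) ?U = 0"
      by (intro prod_zero) auto
    thus "?pp p = 0" by simp
  qed
  from sum.mono_neutral_cong_left[OF finite_permutations[OF finite] id0 p0] show ?thesis
    unfolding det_def by (simp add: sign_id)
qed

lemma tendsto_smult:
  assumes "(f \<longlongrightarrow> a) F" "(g \<longlongrightarrow> b) F"
  shows "((\<lambda>x. f x *s (g x :: complex^'n)) \<longlongrightarrow> a *s b) F"
proof (rule vec_tendstoI)
  fix i
  show "((\<lambda>x. (f x *s g x) $ i) \<longlongrightarrow> (a *s b) $ i) F"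
    unfolding vector_smult_component by (intro tendsto_mult tendsto_vec_nth assms)
qed

lemma smult_tendsto0: "((\<lambda>u::complex. u *s (v::complex^'n)) \<longlongrightarrow> 0) (at 0)"
proof -
  have "((\<lambda>u::complex. \<chi> i. u * v $ i) \<longlongrightarrow> (\<chi> i. 0 * v $ i)) (at 0)"
    by (intro tendsto_intros)
  thus ?thesis by (simp add: vector_scalar_mult_def zero_vec_def)
qed

lemma DP_e1:
  fixes idx :: "nat \<Rightarrow> 'n::finite"
  assumes inj: "inj_on idx {1..CARD('n)}"
  shows "DP idx (s *s axis (idx 1) 1) h = of_nat (CARD('n) + 1) * h $ idx 1 * s ^ CARD('n)
     + (\<Sum>k\<in>{2..CARD('n)}. h $ idx k * s ^ (k - 1))"
proof -
  have n1: "1 \<le> CARD('n)" by (simp add: Suc_leI)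
  have ne: "idx k \<noteq> idx 1" if "2 \<le> k" "k \<le> CARD('n)" for k
  proof
    assume "idx k = idx 1"
    hence "k = 1" using inj_onD[OF inj] that n1 by auto
    thus False using that by auto
  qed
  have z: "(s *s axis (idx 1) 1) $ idx k = 0" if "k \<in> {2..CARD('n)}" for k
    using ne[of k] that by (simp add: axis_def)
  have o: "(s *s axis (idx 1) (1::complex)) $ idx 1 = s" by simp
  have "(\<Sum>k\<in>{2..CARD('n)}. (s *s axis (idx 1) 1) $ idx k * (of_nat (k - 1) * h $ idx 1 * ((s *s axis (idx 1) 1) $ idx 1) ^ (k - 1 - 1))
        + h $ idx k * ((s *s axis (idx 1) 1) $ idx 1) ^ (k - 1)) = (\<Sum>k\<in>{2..CARD('n)}. h $ idx k * s ^ (k - 1))"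
    by (rule sum.cong) (simp_all only: z o, simp)
  thus ?thesis unfolding DP_def o by simp
qed

theorem mainTheorem10:
  fixes idx :: "nat \<Rightarrow> 'n::finite"
    and eta :: "nat \<Rightarrow> complex^'n \<Rightarrow> complex^'n"
    and b :: "nat \<Rightarrow> complex^'n \<Rightarrow> complex"
  assumes idx: "bij_betw idx {1..CARD('n)} UNIV"
    and eta_lift: "\<forall>j\<in>{1..CARD('n)}. liftable (FA idx) (eta j)"
    and eta_lin: "\<forall>j\<in>{1..CARD('n)}. eta j 0 = 0 \<and> (eta j has_derivative etaL idx j) (at 0)"
    and eta_gen: "\<forall>th. liftable (FA idx) th \<longrightarrow>
        (\<exists>c. (\<forall>j\<in>{1..CARD('n)}. holo_fun (c j)) \<and>
             eventually (\<lambda>x. th x = (\<Sum>j\<in>{1..CARD('n)}. c j x *s eta j x)) (nhds 0))"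
    and eta_indep: "\<forall>c. (\<forall>j\<in>{1..CARD('n)}. holo_fun (c j)) \<and>
        eventually (\<lambda>x. (\<Sum>j\<in>{1..CARD('n)}. c j x *s eta j x) = 0) (nhds 0) \<longrightarrow>
        (\<forall>j\<in>{1..CARD('n)}. eventually (\<lambda>x. c j x = 0) (nhds 0))"
    and b_holo: "\<forall>j\<in>{1..CARD('n)}. holo_fun (b j)"
    and b_lift: "liftable (FA idx) (\<lambda>x. \<Sum>j\<in>{1..CARD('n)}. b j x *s eta j x)"
  shows "\<exists>xi D. holo_map xi \<and>
     eventually (\<lambda>x. (\<Sum>j\<in>{1..CARD('n)}. b j (FA idx x) *s eta j (FA idx x))
                     = frechet_derivative (FA idx) (at x) (xi x)) (nhds 0) \<and>
     xi 0 = 0 \<and> (xi has_derivative D) (at 0) \<and>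
     (\<forall>t::complex. det (mat t - matrix D) = (\<Prod>k\<in>{1..CARD('n)}. t - b 1 0 * of_nat k))"
proof -
  define e where "e = (\<lambda>m. axis (idx m) (1::complex) :: complex^'n)"
  define H where "H = (\<lambda>x. \<Sum>j\<in>{1..CARD('n)}. b j x *s eta j x)"
  define LH where "LH = (\<lambda>v. \<Sum>j\<in>{1..CARD('n)}. b j 0 *s etaL idx j v)"
  have n1: "1 \<le> CARD('n)" by (simp add: Suc_leI)
  have inj: "inj_on idx {1..CARD('n)}" using idx by (simp add: bij_betw_def)
  have surj: "idx ` {1..CARD('n)} = UNIV" using idx by (simp add: bij_betw_def)
  have idx_eq: "idx k = idx m \<longleftrightarrow> k = m" if "k \<in> {1..CARD('n)}" "m \<in> {1..CARD('n)}" for k m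
    using inj_onD[OF inj _ that] by auto
  have ne1: "idx k \<noteq> idx 1" if "k \<in> {2..CARD('n)}" for k
    using idx_eq[of k 1] that n1 by auto
  have FA_e1: "FA idx (s *s e 1) = s ^ (CARD('n) + 1) *s e 1" for s
    unfolding FA_def e_def using ne1
    by (auto simp: vec_eq_iff axis_def intro!: sum.neutral)
  have FA_em: "FA idx (s *s e m) = s *s e m" if m: "m \<in> {2..CARD('n)}" for s m
  proof -
    have "(\<Sum>k\<in>{2..CARD('n)}. (s *s e m) $ idx k * ((s *s e m) $ idx 1) ^ (k - 1)) = 0"
      using ne1[OF m] by (intro sum.neutral) (auto simp: e_def axis_def)
    thus ?thesis unfolding FA_def using ne1[OF m]
      by (auto simp: vec_eq_iff e_def axis_def)
  qed
  have FA0: "FA idx 0 = 0" using FA_e1[of 0] by simp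
  have FD: "frechet_derivative (FA idx) (at x) = (\<lambda>h. \<chi> i. if i = idx 1 then DP idx x h else h $ i)" for x
    by (rule frechet_derivative_at[symmetric], rule vec_has_derivative, rule FA_comp_deriv)
  obtain xi where xi_holo: "holo_map xi"
    and E: "eventually (\<lambda>x. H (FA idx x) = frechet_derivative (FA idx) (at x) (xi x)) (nhds 0)"
    using b_lift unfolding liftable_def H_def by blast
  obtain D where Dder: "(xi has_derivative D) (at 0)" and Dlin: "\<And>c v. D (c *s v) = c *s D v"
    using xi_holo unfolding holo_map_def by blast
  have E1: "eventually (\<lambda>x. H (FA idx x) $ idx 1 = DP idx x (xi x)) (nhds 0)"
    using E by eventually_elim (simp add: FD)
  have Ek: "eventually (\<lambda>x. \<forall>i. i \<noteq> idx 1 \<longrightarrow> xi x $ i = H (FA idx x) $ i) (nhds 0)"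
    using E by eventually_elim (simp add: FD)
  have H0: "H 0 = 0" using eta_lin by (auto simp: H_def intro!: sum.neutral)
  have Hdir: "((\<lambda>u. (1/u) *s H (u *s v)) \<longlongrightarrow> LH v) (at 0)" for v
  proof -
    have lim: "((\<lambda>u. \<Sum>j\<in>{1..CARD('n)}. b j (u *s v) *s ((1/u) *s eta j (u *s v))) \<longlongrightarrow> LH v) (at 0)"
      unfolding LH_def
    proof (intro tendsto_sum tendsto_smult)
      fix j assume j: "j \<in> {1..CARD('n)}"
      show "((\<lambda>u. (1/u) *s eta j (u *s v)) \<longlongrightarrow> etaL idx j v) (at 0)"
        using eta_lin j by (intro dir_lim etaL_smult) auto
      obtain U where "open U" "0 \<in> U" "\<forall>x\<in>U. \<exists>D. (b j has_derivative D) (at x) \<and> (\<forall>c v. D (c *s v) = c * D v)"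
        using b_holo j unfolding holo_fun_def by blast
      then obtain Db where "(b j has_derivative Db) (at 0)" by blast
      hence "isCont (b j) 0" by (rule has_derivative_continuous)
      thus "((\<lambda>u. b j (u *s v)) \<longlongrightarrow> b j 0) (at 0)"
        using isCont_tendsto_compose[OF _ smult_tendsto0] by blast
    qed
    have eq: "(1/u) *s H (u *s v) = (\<Sum>j\<in>{1..CARD('n)}. b j (u *s v) *s ((1/u) *s eta j (u *s v)))" for u
      unfolding H_def by (simp add: vec_eq_iff sum_component sum_distrib_left mult.left_commute)
    show ?thesis using lim by (simp add: eq)
  qed
  have LH_entry: "LH (e m) $ idx k = (\<Sum>j\<in>{1..CARD('n)}. b j 0 *
      (if j \<le> k \<and> m = k + 1 - j then of_nat (CARD('n)+1+j-k) else 0))"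
    if "m \<in> {1..CARD('n)}" "k \<in> {1..CARD('n)}" for m k
    unfolding LH_def e_def sum_component vector_smult_component
    using etaL_entry[OF inj _ that(2) that(1)] by (intro sum.cong) auto
  have LH_up: "LH (e m) $ idx k = 0" if "m \<in> {1..CARD('n)}" "k \<in> {1..CARD('n)}" "k < m" for m k
    unfolding LH_entry[OF that(1,2)] using that by (intro sum.neutral) auto
  have LH_diag: "LH (e k) $ idx k = b 1 0 * of_nat (CARD('n)+1+1-k)" if "k \<in> {1..CARD('n)}" for k
  proof -
    have "LH (e k) $ idx k = (\<Sum>j\<in>{1..CARD('n)}. if j = 1 then b j 0 * of_nat (CARD('n)+1+j-k) else 0)"
      unfolding LH_entry[OF that that] using that by (intro sum.cong) auto
    also have "\<dots> = b 1 0 * of_nat (CARD('n)+1+1-k)" using n1 by (simp add: sum.delta')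
    finally show ?thesis .
  qed
  have pw: "filterlim (\<lambda>s::complex. s ^ (CARD('n)+1)) (at 0) (at 0)"
  proof (rule filterlim_atI)
    have "((\<lambda>s::complex. s ^ (CARD('n)+1)) \<longlongrightarrow> 0 ^ (CARD('n)+1)) (at 0)" by (intro tendsto_intros)
    thus "((\<lambda>s::complex. s ^ (CARD('n)+1)) \<longlongrightarrow> 0) (at 0)" by simp
    show "\<forall>\<^sub>F s in at (0::complex). s ^ (CARD('n)+1) \<noteq> 0" by (auto simp: eventually_at_filter)
  qed
  define g where "g = (\<lambda>s::complex. (1 / s ^ (CARD('n)+1)) *s H (s ^ (CARD('n)+1) *s e 1))"
  have glim: "(g \<longlongrightarrow> LH (e 1)) (at 0)"
    unfolding g_def using filterlim_compose[OF Hdir pw] by (simp add: o_def)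
  have Hg: "H (FA idx (s *s e 1)) = s ^ (CARD('n)+1) *s g s" if "s \<noteq> 0" for s
    using that by (simp only: g_def FA_e1) (simp add: vector_smult_assoc)
  have tl: "filterlim (\<lambda>s::complex. s *s v) (nhds 0) (at 0)" for v :: "complex^'n"
    by (rule smult_tendsto0)
  have ev_along: "eventually (\<lambda>s. P (s *s v)) (at 0)" if "eventually P (nhds 0)" for P :: "complex^'n \<Rightarrow> bool" and v :: "complex^'n"
    using tl[of v] that unfolding filterlim_iff by blast
  define q where "q = (\<lambda>s. (g s $ idx 1 - (\<Sum>k\<in>{2..CARD('n)}. s ^ (k - 1) * g s $ idx k)) / of_nat (CARD('n)+1))"
  have xi_e1: "eventually (\<lambda>s. xi (s *s e 1) $ idx 1 = s * q s) (at 0)"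
  proof -
    have "eventually (\<lambda>s. s \<noteq> 0 \<and> H (FA idx (s *s e 1)) $ idx 1 = DP idx (s *s e 1) (xi (s *s e 1))
       \<and> (\<forall>i. i \<noteq> idx 1 \<longrightarrow> xi (s *s e 1) $ i = H (FA idx (s *s e 1)) $ i)) (at 0)"
    proof (intro eventually_conj)
      show "eventually (\<lambda>s::complex. s \<noteq> 0) (at 0)" by (simp add: eventually_at_filter)
    qed (fact ev_along[OF E1, of "e 1"], fact ev_along[OF Ek, of "e 1"])
    thus ?thesis
    proof eventually_elim
      case (elim s)
      hence s0: "s \<noteq> 0" and eq1: "H (FA idx (s *s e 1)) $ idx 1 = DP idx (s *s e 1) (xi (s *s e 1))"
        and eqk: "\<And>i. i \<noteq> idx 1 \<Longrightarrow> xi (s *s e 1) $ i = H (FA idx (s *s e 1)) $ i" by auto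
      have xk: "xi (s *s e 1) $ idx k = s ^ (CARD('n)+1) * g s $ idx k" if "k \<in> {2..CARD('n)}" for k
        using eqk[OF ne1[OF that]] Hg[OF s0] by simp
      have "s ^ (CARD('n)+1) * g s $ idx 1 = of_nat (CARD('n) + 1) * xi (s *s e 1) $ idx 1 * s ^ CARD('n)
          + (\<Sum>k\<in>{2..CARD('n)}. s ^ (CARD('n)+1) * g s $ idx k * s ^ (k - 1))"
        using eq1 Hg[OF s0] DP_e1[OF inj, of s] xk unfolding e_def by (simp add: e_def)
      also have "(\<Sum>k\<in>{2..CARD('n)}. s ^ (CARD('n)+1) * g s $ idx k * s ^ (k - 1))
          = s ^ (CARD('n)+1) * (\<Sum>k\<in>{2..CARD('n)}. s ^ (k - 1) * g s $ idx k)"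
        by (simp add: sum_distrib_left mult_ac)
      finally have "s ^ CARD('n) * (s * (g s $ idx 1 - (\<Sum>k\<in>{2..CARD('n)}. s ^ (k - 1) * g s $ idx k)))
          = s ^ CARD('n) * (of_nat (CARD('n) + 1) * xi (s *s e 1) $ idx 1)"
        by (simp add: algebra_simps)
      hence "s * (g s $ idx 1 - (\<Sum>k\<in>{2..CARD('n)}. s ^ (k - 1) * g s $ idx k))
          = of_nat (CARD('n) + 1) * xi (s *s e 1) $ idx 1"
        using s0 by simp
      thus ?case unfolding q_def by (simp add: field_simps del: of_nat_Suc)
    qed
  qed
  have nzc: "(1::complex) + of_nat CARD('n) \<noteq> 0"
  proof
    assume "(1::complex) + of_nat CARD('n) = 0"
    hence "Re ((1::complex) + of_nat CARD('n)) = 0" by simp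
    thus False by simp
  qed
  have qlim: "(q \<longlongrightarrow> b 1 0) (at 0)"
  proof -
    have "(q \<longlongrightarrow> (LH (e 1) $ idx 1 - (\<Sum>k\<in>{2..CARD('n)}. 0 ^ (k - 1) * LH (e 1) $ idx k)) / of_nat (CARD('n)+1)) (at 0)"
      unfolding q_def by (intro tendsto_intros tendsto_vec_nth glim) (use nzc in auto)
    moreover have "(\<Sum>k\<in>{2..CARD('n)}. (0::complex) ^ (k - 1) * LH (e 1) $ idx k) = 0"
      by (intro sum.neutral) auto
    moreover have "LH (e 1) $ idx 1 = b 1 0 * of_nat (CARD('n)+1)"
      using LH_diag[of 1] n1 by simp
    ultimately show ?thesis using nzc by simp
  qed
  have xi_cont: "isCont xi 0"
    using Dder by (rule has_derivative_continuous)
  have xi0: "xi 0 = 0"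
  proof -
    have "((\<lambda>s. xi (s *s e 1) $ idx 1) \<longlongrightarrow> xi 0 $ idx 1) (at 0)"
      using isCont_tendsto_compose[OF xi_cont smult_tendsto0] by (rule tendsto_vec_nth)
    moreover have "((\<lambda>s. xi (s *s e 1) $ idx 1) \<longlongrightarrow> 0 * b 1 0) (at 0)"
      by (rule Lim_transform_eventually[OF tendsto_mult[OF tendsto_ident_at qlim]])
        (use xi_e1 in \<open>auto elim: eventually_mono\<close>)
    ultimately have 1: "xi 0 $ idx 1 = 0" using tendsto_unique[OF at_neq_bot] by fastforce
    have "\<forall>i. i \<noteq> idx 1 \<longrightarrow> xi 0 $ i = H (FA idx 0) $ i" using eventually_nhds_x_imp_x[OF Ek] .
    hence "\<forall>i. i \<noteq> idx 1 \<longrightarrow> xi 0 $ i = 0" by (simp add: FA0 H0)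
    thus ?thesis using 1 unfolding vec_eq_iff by (metis zero_index)
  qed
  have dxi: "((\<lambda>u. (1/u) *s xi (u *s v)) \<longlongrightarrow> D v) (at 0)" for v
    by (rule dir_lim[OF Dder xi0 Dlin])
  have D11: "D (e 1) $ idx 1 = b 1 0"
  proof -
    have "((\<lambda>u. ((1/u) *s xi (u *s e 1)) $ idx 1) \<longlongrightarrow> D (e 1) $ idx 1) (at 0)"
      by (intro tendsto_vec_nth dxi)
    moreover have "((\<lambda>u. ((1/u) *s xi (u *s e 1)) $ idx 1) \<longlongrightarrow> b 1 0) (at 0)"
      by (rule Lim_transform_eventually[OF qlim])
        (use xi_e1 in \<open>auto simp: eventually_at_filter elim: eventually_mono\<close>)
    ultimately show ?thesis using tendsto_unique[OF at_neq_bot] by blast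
  qed
  have Dk1: "D (e 1) $ i = 0" if i: "i \<noteq> idx 1" for i
  proof -
    have "((\<lambda>u. ((1/u) *s xi (u *s e 1)) $ i) \<longlongrightarrow> D (e 1) $ i) (at 0)"
      by (intro tendsto_vec_nth dxi)
    moreover have "((\<lambda>u. u ^ CARD('n) * g u $ i) \<longlongrightarrow> 0 ^ CARD('n) * LH (e 1) $ i) (at 0)"
      by (intro tendsto_intros tendsto_vec_nth glim)
    hence lim0: "((\<lambda>u. u ^ CARD('n) * g u $ i) \<longlongrightarrow> 0) (at 0)" using n1 by (simp add: power_0_left)
    have "((\<lambda>u. ((1/u) *s xi (u *s e 1)) $ i) \<longlongrightarrow> 0) (at 0)"
    proof (rule Lim_transform_eventually[OF lim0])
      have "\<forall>\<^sub>F u in at 0. u \<noteq> 0 \<and> (\<forall>i. i \<noteq> idx 1 \<longrightarrow> xi (u *s e 1) $ i = H (FA idx (u *s e 1)) $ i)"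
        by (intro eventually_conj ev_along[OF Ek]) (simp add: eventually_at_filter)
      thus "\<forall>\<^sub>F u in at 0. u ^ CARD('n) * g u $ i = ((1/u) *s xi (u *s e 1)) $ i"
      proof eventually_elim
        case (elim u)
        hence "xi (u *s e 1) $ i = u ^ (CARD('n)+1) * g u $ i" using i Hg[of u] by simp
        thus ?case using elim by simp
      qed
    qed
    ultimately show ?thesis using tendsto_unique[OF at_neq_bot] by blast
  qed
  have Dkm: "D (e m) $ i = LH (e m) $ i" if i: "i \<noteq> idx 1" and m: "m \<in> {2..CARD('n)}" for i m
  proof -
    have "((\<lambda>u. ((1/u) *s xi (u *s e m)) $ i) \<longlongrightarrow> D (e m) $ i) (at 0)"
      by (intro tendsto_vec_nth dxi)
    moreover have "((\<lambda>u. ((1/u) *s H (u *s e m)) $ i) \<longlongrightarrow> LH (e m) $ i) (at 0)"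
      by (intro tendsto_vec_nth Hdir)
    hence "((\<lambda>u. ((1/u) *s xi (u *s e m)) $ i) \<longlongrightarrow> LH (e m) $ i) (at 0)"
    proof (rule Lim_transform_eventually)
      show "\<forall>\<^sub>F u in at 0. ((1/u) *s H (u *s e m)) $ i = ((1/u) *s xi (u *s e m)) $ i"
      proof -
        have "\<forall>\<^sub>F u in at 0. u \<noteq> 0 \<and> (\<forall>i. i \<noteq> idx 1 \<longrightarrow> xi (u *s e m) $ i = H (FA idx (u *s e m)) $ i)"
          by (intro eventually_conj ev_along[OF Ek]) (simp add: eventually_at_filter)
        thus ?thesis
        proof eventually_elim
          case (elim u)
          hence "xi (u *s e m) $ i = H (u *s e m) $ i" using i FA_em[OF m, of u] by simp
          thus ?case by simp
        qed
      qed
    qed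
    ultimately show ?thesis using tendsto_unique[OF at_neq_bot] by blast
  qed
  have detf: "det (mat t - matrix D) = (\<Prod>k\<in>{1..CARD('n)}. t - b 1 0 * of_nat k)" for t
  proof -
    define M where "M = mat t - matrix D"
    have Mij: "M $ i $ j = (if i = j then t else 0) - D (axis j 1) $ i" for i j
      by (simp add: M_def mat_def matrix_def)
    define ri where "ri = (\<lambda>i. inv_into {1..CARD('n)} idx i)"
    have ri: "ri i \<in> {1..CARD('n)}" "idx (ri i) = i" for i
    proof -
      have "i \<in> idx ` {1..CARD('n)}" using surj by simp
      thus "ri i \<in> {1..CARD('n)}" "idx (ri i) = i" unfolding ri_def
        by (rule inv_into_into, rule f_inv_into_f)
    qed
    define r where "r = (\<lambda>i. if i = idx 1 then CARD('n) + 1 else ri i)"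
    have rinj: "inj r"
    proof (rule injI)
      fix i j assume "r i = r j"
      hence eq: "r i = r j" .
      have le: "ri x \<noteq> Suc CARD('n)" "Suc CARD('n) \<noteq> ri x" for x using ri(1)[of x] by auto
      show "i = j"
      proof (cases "i = idx 1"; cases "j = idx 1")
        assume "i \<noteq> idx 1" "j \<noteq> idx 1"
        hence "ri i = ri j" using eq by (simp add: r_def)
        thus "i = j" using ri(2)[of i] ri(2)[of j] by metis
      qed (use eq le in \<open>auto simp: r_def split: if_splits\<close>)
    qed
    have "det M = prod (\<lambda>i. M$i$i) UNIV"
    proof (rule det_rank_tri[OF rinj])
      fix i j assume lt: "r i < r j"
      have i1: "i \<noteq> idx 1" using lt ri[of j] unfolding r_def by (auto split: if_splits)
      have "ri i \<noteq> 1" using ri(2)[of i] i1 by auto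
      hence k: "ri i \<in> {2..CARD('n)}" using ri(1)[of i] by auto
      show "M $ i $ j = 0"
      proof (cases "j = idx 1")
        case True
        thus ?thesis using i1 Dk1[OF i1] by (simp add: Mij e_def)
      next
        case False
        have "r i = ri i" using i1 by (simp add: r_def)
        moreover have "r j = ri j" using False by (simp add: r_def)
        ultimately have m: "ri j \<in> {2..CARD('n)}" "ri i < ri j" using lt ri(1)[of j] k by auto
        have "D (axis j 1) $ i = D (e (ri j)) $ idx (ri i)" by (simp add: e_def ri)
        also have "\<dots> = LH (e (ri j)) $ idx (ri i)" using Dkm[OF i1 m(1)] by (simp add: ri)
        also have "\<dots> = 0" using LH_up[of "ri j" "ri i"] m k by auto
        finally show ?thesis using False lt by (auto simp: Mij)
      qed
    qed
    also have "\<dots> = (\<Prod>k\<in>{1..CARD('n)}. M $ idx k $ idx k)"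
      using prod.reindex_bij_betw[OF idx, of "\<lambda>i. M$i$i"] by simp
    also have "\<dots> = (\<Prod>k\<in>{1..CARD('n)}. t - b 1 0 * of_nat (if k = 1 then 1 else CARD('n) + 2 - k))"
    proof (rule prod.cong[OF refl])
      fix k assume k: "k \<in> {1..CARD('n)}"
      show "M $ idx k $ idx k = t - b 1 0 * of_nat (if k = 1 then 1 else CARD('n) + 2 - k)"
      proof (cases "k = 1")
        case True thus ?thesis using D11 by (simp add: Mij e_def)
      next
        case False
        hence k2: "k \<in> {2..CARD('n)}" using k by auto
        have "D (axis (idx k) 1) $ idx k = LH (e k) $ idx k"
          using Dkm[OF ne1[OF k2] k2] by (simp add: e_def)
        also have "\<dots> = b 1 0 * of_nat (CARD('n) + 2 - k)" using LH_diag[OF k] by simp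
        finally show ?thesis using False by (simp add: Mij)
      qed
    qed
    also have "\<dots> = (\<Prod>k\<in>{1..CARD('n)}. t - b 1 0 * of_nat k)"
    proof -
      define sg where "sg = (\<lambda>k::nat. if k = 1 then 1 else CARD('n) + 2 - k)"
      have "bij_betw sg {1..CARD('n)} {1..CARD('n)}"
        by (rule bij_betw_byWitness[where f'=sg]) (auto simp: sg_def)
      from prod.reindex_bij_betw[OF this, of "\<lambda>k. t - b 1 0 * of_nat k"] show ?thesis
        by (simp add: sg_def)
    qed
    finally show ?thesis unfolding M_def .
  qed
  show ?thesis
    using xi_holo E xi0 Dder detf unfolding H_def by blast
qed

end
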